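(* There exists a constant $c>0$ such that for all sufficiently large $n$ there is an $n$-vertex $3$-uniform generalised hedgehog $H^*$ such that, for every standard hedgehog $S_n$ on $n$ vertices (whenever $n=m+\binom{m}{2}$ for some integer $m$), $R(S_n,H^* )\ge c\,n^{3/2}/\log n$.
   Context: A $3$-graph is a $3$-uniform hypergraph. For $3$-graphs $G,H$, the ($2$-colour) Ramsey number $R(G,H)$ is the least $N$ such that every colouring of the edges of the complete $3$-graph on $N$ vertices with red and blue contains a blue copy of $G$ or a red copy of $H$. A (generalised) hedgehog is a $3$-graph on vertex set $B\sqcup S$ ($B$ the body, $S$ the spikes) in which every edge consists of one spike and two body vertices, and every spike lies in exactly one edge (different spikes may be attached to the same pair of body vertices, and some pairs of body vertices may have no spike). The standard hedgehog with body of size $m$ has $|S|=\binom{m}{2}$ and each pair of body vertices forms an edge with exactly one spike. *)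

theory Defs
  imports Complex_Main
begin

definition is_3graph :: "'a set \<Rightarrow> 'a set set \<Rightarrow> bool" where
  "is_3graph V E \<longleftrightarrow> finite V \<and> (\<forall>e\<in>E. e \<subseteq> V \<and> card e = 3)"

text \<open>A 2-colouring of the complete 3-graph on vertex set {0..<N} is a map on 3-sets;
  True = red, False = blue.\<close>
definition has_copy :: "nat \<Rightarrow> (nat set \<Rightarrow> bool) \<Rightarrow> bool \<Rightarrow> 'a set \<Rightarrow> 'a set set \<Rightarrow> bool" where
  "has_copy N col b V E \<longleftrightarrow>
     (\<exists>f. inj_on f V \<and> f ` V \<subseteq> {0..<N} \<and> (\<forall>e\<in>E. col (f ` e) = b))"

definition arrows3 :: "nat \<Rightarrow> 'a set \<Rightarrow> 'a set set \<Rightarrow> 'b set \<Rightarrow> 'b set set \<Rightarrow> bool" where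
  "arrows3 N VG EG VH EH \<longleftrightarrow>
     (\<forall>col. has_copy N col False VG EG \<or> has_copy N col True VH EH)"

definition ramsey3 :: "'a set \<Rightarrow> 'a set set \<Rightarrow> 'b set \<Rightarrow> 'b set set \<Rightarrow> nat" where
  "ramsey3 VG EG VH EH = (LEAST N. arrows3 N VG EG VH EH)"

definition hedgehog_with :: "'a set \<Rightarrow> 'a set \<Rightarrow> 'a set \<Rightarrow> 'a set set \<Rightarrow> bool" where
  "hedgehog_with B S V E \<longleftrightarrow>
     is_3graph V E \<and> V = B \<union> S \<and> B \<inter> S = {} \<and>
     (\<forall>e\<in>E. card (e \<inter> S) = 1 \<and> card (e \<inter> B) = 2) \<and>
     (\<forall>s\<in>S. \<exists>!e. e \<in> E \<and> s \<in> e)"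

definition gen_hedgehog :: "'a set \<Rightarrow> 'a set set \<Rightarrow> bool" where
  "gen_hedgehog V E \<longleftrightarrow> (\<exists>B S. hedgehog_with B S V E)"

definition std_hedgehog :: "'a set \<Rightarrow> 'a set set \<Rightarrow> bool" where
  "std_hedgehog V E \<longleftrightarrow> (\<exists>B S. hedgehog_with B S V E \<and>
     (\<forall>x\<in>B. \<forall>y\<in>B. x \<noteq> y \<longrightarrow> (\<exists>!s. s \<in> S \<and> {x, y, s} \<in> E)))"

end

theory Submission
  imports Defs "HOL-Library.Ramsey" "HOL-Real_Asymp.Real_Asymp"
begin


lemma exp_ge_pow_fact:
  fixes x :: real assumes "0 \<le> x" shows "x^n / fact n \<le> exp x"
proof -
  have s: "summable (\<lambda>k. x^k /\<^sub>R fact k)" by (rule summable_exp_generic)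
  have "sum (\<lambda>k. x^k /\<^sub>R fact k) {n} \<le> (\<Sum>k. x^k /\<^sub>R fact k)"
    by (rule sum_le_suminf[OF s]) (use assms in auto)
  then show ?thesis by (simp add: exp_def divide_inverse mult.commute)
qed

lemma sum_Pow_prod:
  fixes a b :: "'a \<Rightarrow> real"
  assumes "finite P"
  shows "(\<Sum>E\<in>Pow P. \<Prod>e\<in>P. if e \<in> E then a e else b e) = (\<Prod>e\<in>P. a e + b e)"
  using assms
proof (induction P rule: finite_induct)
  case empty
  then show ?case by simp
next
  case (insert x P)
  have disj: "Pow P \<inter> insert x ` Pow P = {}" using insert by auto
  have inj: "inj_on (insert x) (Pow P)" unfolding inj_on_def by (metis PowD in_mono insert.hyps(2) insert_ident)
  have 1: "(\<Sum>E\<in>Pow P. \<Prod>e\<in>insert x P. if e \<in> E then a e else b e)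
        = b x * (\<Sum>E\<in>Pow P. \<Prod>e\<in>P. if e \<in> E then a e else b e)"
  proof -
    have "\<And>E. E \<in> Pow P \<Longrightarrow> (\<Prod>e\<in>insert x P. if e \<in> E then a e else b e)
          = b x * (\<Prod>e\<in>P. if e \<in> E then a e else b e)"
      using insert by (auto simp: prod.insert)
    then show ?thesis by (simp add: sum_distrib_left)
  qed
  have 2: "(\<Sum>E\<in>insert x ` Pow P. \<Prod>e\<in>insert x P. if e \<in> E then a e else b e)
        = a x * (\<Sum>E\<in>Pow P. \<Prod>e\<in>P. if e \<in> E then a e else b e)"
  proof -
    have "(\<Sum>E\<in>insert x ` Pow P. \<Prod>e\<in>insert x P. if e \<in> E then a e else b e)
       = (\<Sum>E\<in>Pow P. \<Prod>e\<in>insert x P. if e \<in> insert x E then a e else b e)"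
      by (simp add: sum.reindex[OF inj])
    also have "\<dots> = (\<Sum>E\<in>Pow P. a x * (\<Prod>e\<in>P. if e \<in> E then a e else b e))"
    proof (rule sum.cong[OF refl])
      fix E assume E: "E \<in> Pow P"
      have "(\<Prod>e\<in>insert x P. if e \<in> insert x E then a e else b e)
          = a x * (\<Prod>e\<in>P. if e \<in> insert x E then a e else b e)"
        using insert by (simp add: prod.insert)
      also have "(\<Prod>e\<in>P. if e \<in> insert x E then a e else b e) = (\<Prod>e\<in>P. if e \<in> E then a e else b e)"
        using insert by (intro prod.cong) auto
      finally show "(\<Prod>e\<in>insert x P. if e \<in> insert x E then a e else b e) = a x * (\<Prod>e\<in>P. if e \<in> E then a e else b e)" .
    qed
    finally show ?thesis by (simp add: sum_distrib_left)
  qed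
  have "Pow (insert x P) = Pow P \<union> insert x ` Pow P" by (rule Pow_insert)
  then have "(\<Sum>E\<in>Pow (insert x P). \<Prod>e\<in>insert x P. if e \<in> E then a e else b e)
     = (\<Sum>E\<in>Pow P. \<Prod>e\<in>insert x P. if e \<in> E then a e else b e)
       + (\<Sum>E\<in>insert x ` Pow P. \<Prod>e\<in>insert x P. if e \<in> E then a e else b e)"
    using insert disj by (simp add: sum.union_disjoint)
  also have "\<dots> = (a x + b x) * (\<Prod>e\<in>P. a e + b e)"
    using 1 2 insert by (simp add: algebra_simps)
  finally show ?case using insert by (simp add: prod.insert)
qed

definition wt :: "real \<Rightarrow> 'a set \<Rightarrow> 'a set \<Rightarrow> real" where
  "wt p P E = (\<Prod>e\<in>P. if e \<in> E then p else 1 - p)"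

lemma wt_sum: "finite P \<Longrightarrow> (\<Sum>E\<in>Pow P. wt p P E) = 1"
  unfolding wt_def using sum_Pow_prod[of P "\<lambda>_. p" "\<lambda>_. 1-p"] by simp

lemma wt_nonneg: "0 \<le> p \<Longrightarrow> p \<le> 1 \<Longrightarrow> 0 \<le> wt p P E"
  unfolding wt_def by (intro prod_nonneg) auto

lemma wt_present:
  assumes "finite P" "A \<subseteq> P"
  shows "(\<Sum>E\<in>Pow P. wt p P E * (if A \<subseteq> E then 1 else 0)) = p ^ card A"
proof -
  have "(\<Sum>E\<in>Pow P. wt p P E * (if A \<subseteq> E then 1 else 0))
      = (\<Sum>E\<in>Pow P. \<Prod>e\<in>P. if e \<in> E then p else (if e \<in> A then 0 else 1 - p))"
  proof (rule sum.cong[OF refl])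
    fix E assume E: "E \<in> Pow P"
    show "wt p P E * (if A \<subseteq> E then 1 else 0) = (\<Prod>e\<in>P. if e \<in> E then p else (if e \<in> A then 0 else 1 - p))"
    proof (cases "A \<subseteq> E")
      case True
      then show ?thesis unfolding wt_def by (simp, intro prod.cong) auto
    next
      case False
      then obtain e where "e \<in> A" "e \<notin> E" by blast
      then have "\<exists>e\<in>P. (if e \<in> E then p else (if e \<in> A then 0 else 1 - p)) = 0" using assms by auto
      then show ?thesis using False assms by (simp add: prod_zero)
    qed
  qed
  also have "\<dots> = (\<Prod>e\<in>P. p + (if e \<in> A then 0 else 1 - p))"
    using sum_Pow_prod[OF assms(1), of "\<lambda>_. p" "\<lambda>e. if e \<in> A then 0 else 1 - p"] by simp
  also have "\<dots> = (\<Prod>e\<in>P. if e \<in> A then p else 1)"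
    by (intro prod.cong) auto
  also have "\<dots> = p ^ card A"
    using assms by (simp add: prod.If_cases Int_absorb1 Int_commute inf.absorb1 inf.absorb2)
  finally show ?thesis .
qed

lemma wt_absent:
  assumes "finite P" "A \<subseteq> P"
  shows "(\<Sum>E\<in>Pow P. wt p P E * (if A \<inter> E = {} then 1 else 0)) = (1 - p) ^ card A"
proof -
  have "(\<Sum>E\<in>Pow P. wt p P E * (if A \<inter> E = {} then 1 else 0))
      = (\<Sum>E\<in>Pow P. \<Prod>e\<in>P. if e \<in> E then (if e \<in> A then 0 else p) else 1 - p)"
  proof (rule sum.cong[OF refl])
    fix E assume E: "E \<in> Pow P"
    show "wt p P E * (if A \<inter> E = {} then 1 else 0) = (\<Prod>e\<in>P. if e \<in> E then (if e \<in> A then 0 else p) else 1 - p)"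
    proof (cases "A \<inter> E = {}")
      case True
      then show ?thesis unfolding wt_def by (simp, intro prod.cong) auto
    next
      case False
      then obtain e where "e \<in> A" "e \<in> E" by blast
      then have "\<exists>e\<in>P. (if e \<in> E then (if e \<in> A then 0 else p) else 1 - p) = 0" using assms by auto
      then show ?thesis using False assms by (simp add: prod_zero)
    qed
  qed
  also have "\<dots> = (\<Prod>e\<in>P. (if e \<in> A then 0 else p) + (1 - p))"
    using sum_Pow_prod[OF assms(1), of "\<lambda>e. if e \<in> A then 0 else p" "\<lambda>_. 1 - p"] by simp
  also have "\<dots> = (\<Prod>e\<in>P. if e \<in> A then 1 - p else 1)"
    by (intro prod.cong) auto
  also have "\<dots> = (1 - p) ^ card A"
    using assms by (simp add: prod.If_cases Int_absorb1 Int_commute inf.absorb1 inf.absorb2)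
  finally show ?thesis .
qed

lemma exists_good:
  fixes p :: real and A1 :: "'i \<Rightarrow> 'a set" and A2 :: "'j \<Rightarrow> 'a set" and A0 :: "'k \<Rightarrow> 'a set"
  assumes P: "finite P" and p: "0 \<le> p" "p \<le> 1"
    and fin: "finite I1" "finite I2" "finite I0"
    and sub: "\<forall>i\<in>I1. A1 i \<subseteq> P" "\<forall>i\<in>I2. A2 i \<subseteq> P" "\<forall>i\<in>I0. A0 i \<subseteq> P"
    and small: "(\<Sum>i\<in>I1. p ^ card (A1 i)) + (\<Sum>i\<in>I2. p ^ card (A2 i)) + (\<Sum>i\<in>I0. (1-p) ^ card (A0 i)) < 1"
  shows "\<exists>E\<subseteq>P. (\<forall>i\<in>I1. \<not> A1 i \<subseteq> E) \<and> (\<forall>i\<in>I2. \<not> A2 i \<subseteq> E) \<and> (\<forall>i\<in>I0. A0 i \<inter> E \<noteq> {})"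
proof (rule ccontr)
  assume contra: "\<not> ?thesis"
  define cnt where "cnt E = (\<Sum>i\<in>I1. if A1 i \<subseteq> E then 1 else 0) + (\<Sum>i\<in>I2. if A2 i \<subseteq> E then 1 else 0)
      + (\<Sum>i\<in>I0. if A0 i \<inter> E = {} then 1 else (0::real))" for E
  have cnt1: "1 \<le> cnt E" if "E \<in> Pow P" for E
  proof -
    have n1: "0 \<le> (\<Sum>i\<in>I1. if A1 i \<subseteq> E then 1 else (0::real))" by (intro sum_nonneg) auto
    have n2: "0 \<le> (\<Sum>i\<in>I2. if A2 i \<subseteq> E then 1 else (0::real))" by (intro sum_nonneg) auto
    have n0: "0 \<le> (\<Sum>i\<in>I0. if A0 i \<inter> E = {} then 1 else (0::real))" by (intro sum_nonneg) auto
    from contra that have "(\<exists>i\<in>I1. A1 i \<subseteq> E) \<or> (\<exists>i\<in>I2. A2 i \<subseteq> E) \<or> (\<exists>i\<in>I0. A0 i \<inter> E = {})" by auto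
    then show ?thesis
    proof (elim disjE bexE)
      fix i assume "i \<in> I1" "A1 i \<subseteq> E"
      then have "(if A1 i \<subseteq> E then 1 else (0::real)) \<le> (\<Sum>i\<in>I1. if A1 i \<subseteq> E then 1 else 0)"
        using fin by (intro member_le_sum) auto
      then show ?thesis using n2 n0 \<open>A1 i \<subseteq> E\<close> unfolding cnt_def by simp
    next
      fix i assume "i \<in> I2" "A2 i \<subseteq> E"
      then have "(if A2 i \<subseteq> E then 1 else (0::real)) \<le> (\<Sum>i\<in>I2. if A2 i \<subseteq> E then 1 else 0)"
        using fin by (intro member_le_sum) auto
      then show ?thesis using n1 n0 \<open>A2 i \<subseteq> E\<close> unfolding cnt_def by simp
    next
      fix i assume "i \<in> I0" "A0 i \<inter> E = {}"
      then have "(if A0 i \<inter> E = {} then 1 else (0::real)) \<le> (\<Sum>i\<in>I0. if A0 i \<inter> E = {} then 1 else 0)"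
        using fin by (intro member_le_sum) auto
      then show ?thesis using n1 n2 \<open>A0 i \<inter> E = {}\<close> unfolding cnt_def by simp
    qed
  qed
  have "1 = (\<Sum>E\<in>Pow P. wt p P E)" using wt_sum[OF P] by simp
  also have "\<dots> \<le> (\<Sum>E\<in>Pow P. wt p P E * cnt E)"
  proof (intro sum_mono)
    fix E assume E: "E \<in> Pow P"
    show "wt p P E \<le> wt p P E * cnt E"
      using mult_left_mono[OF cnt1[OF E] wt_nonneg[OF p]] by simp
  qed
  also have "\<dots> = (\<Sum>i\<in>I1. \<Sum>E\<in>Pow P. wt p P E * (if A1 i \<subseteq> E then 1 else 0))
       + (\<Sum>i\<in>I2. \<Sum>E\<in>Pow P. wt p P E * (if A2 i \<subseteq> E then 1 else 0))
       + (\<Sum>i\<in>I0. \<Sum>E\<in>Pow P. wt p P E * (if A0 i \<inter> E = {} then 1 else 0))"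
    unfolding cnt_def by (simp add: distrib_left sum.distrib sum_distrib_left sum.swap[of _ "Pow P"])
  also have "\<dots> = (\<Sum>i\<in>I1. p ^ card (A1 i)) + (\<Sum>i\<in>I2. p ^ card (A2 i)) + (\<Sum>i\<in>I0. (1-p) ^ card (A0 i))"
    using sub P by (simp add: wt_present wt_absent)
  finally show False using small by simp
qed




lemma real_choose_two: "real (a choose 2) = real a * (real a - 1) / 2"
  by (simp add: binomial_gbinomial gbinomial_pochhammer' pochhammer_Suc numeral_2_eq_2 algebra_simps)

lemma choose_le_pow_real: "real (N choose k) \<le> real N ^ k"
proof (cases "k \<le> N")
  case True
  then have "N choose k \<le> N ^ k" by (rule binomial_le_pow)
  then show ?thesis by (metis of_nat_le_iff of_nat_power)
next
  case False
  then show ?thesis by (simp add: binomial_eq_0)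
qed

lemma eventually_real_facts:
  "eventually (\<lambda>x::real. x \<ge> 1000 \<and> 4 * ln x / sqrt x \<le> 1
     \<and> (x*sqrt x/(10000*ln x))^8 * (4*ln x/sqrt x)^28 < 1/3
     \<and> x*sqrt x/(10000*ln x) * (1/2) powr (x/256) < 1/3
     \<and> 3/2*ln x - 2*ln x*(sqrt x-2)/sqrt x \<le> - ln x/4
     \<and> (sqrt x - 1)*ln x/4 \<ge> 3
     \<and> x*sqrt x/(10000*ln x) - 1 \<ge> x powr (3/2)/(20000*ln x)
     \<and> (x-8)/128 - 1 \<ge> x/256
     \<and> ln x \<ge> 1 \<and> sqrt x \<ge> 40) at_top"
  by (intro eventually_conj; real_asymp)




lemma numeric:
  fixes n :: nat and x s L p :: real and N a D :: nat
  assumes xd: "x = real n" and sd: "s = sqrt x" and Ld: "L = ln x" and pd: "p = 4*L/s"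
    and Nd: "N = nat \<lfloor>x*s/(10000*L)\<rfloor>" and ad: "a = nat \<lfloor>s\<rfloor>" and Dd: "D = (n - 8) div 128"
    and F: "x \<ge> 1000 \<and> 4 * ln x / sqrt x \<le> 1
     \<and> (x*sqrt x/(10000*ln x))^8 * (4*ln x/sqrt x)^28 < 1/3
     \<and> x*sqrt x/(10000*ln x) * (1/2) powr (x/256) < 1/3
     \<and> 3/2*ln x - 2*ln x*(sqrt x-2)/sqrt x \<le> - ln x/4
     \<and> (sqrt x - 1)*ln x/4 \<ge> 3
     \<and> x*sqrt x/(10000*ln x) - 1 \<ge> x powr (3/2)/(20000*ln x)
     \<and> (x-8)/128 - 1 \<ge> x/256
     \<and> ln x \<ge> 1 \<and> sqrt x \<ge> 40"
  shows "0 \<le> p" "p \<le> 1"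
    "real (N choose 8) * p ^ 28 + real N * real ((N - 1) choose D) * p ^ D
                + real (N choose a) * (1 - p) ^ (a choose 2) < 1"
    "real N \<ge> x powr (3/2) / (20000 * ln x)"
    "a * a \<le> n" "a \<ge> 2" "D \<ge> 1" "n \<ge> 8"
proof -
  note F' = F[folded sd, folded Ld]
  have x1000: "x \<ge> 1000" and L1: "L \<ge> 1" and s40: "s \<ge> 40" using F' by auto
  have spos: "s > 0" using s40 by simp
  have ss: "s * s = x" using sd x1000 by simp
  show p0: "0 \<le> p" using pd L1 spos by simp
  show p1: "p \<le> 1" using F' pd by simp
  define M where "M = x*s/(10000*L)"
  have Mpos: "M \<ge> 0" using M_def x1000 spos L1 by simp
  have NM: "real N \<le> M" using Nd M_def Mpos by linarith
  have NM2: "real N \<ge> M - 1" using Nd M_def Mpos by linarith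
  have Mbig: "M - 1 \<ge> x powr (3/2) / (20000 * ln x)" using F' M_def Ld by simp
  show "real N \<ge> x powr (3/2) / (20000 * ln x)" using NM2 Mbig by linarith
  have xpos: "x powr (3/2) / (20000 * ln x) > 0" using x1000 L1 Ld by simp
  have Npos: "real N > 0" using NM2 Mbig xpos by linarith
  show "n \<ge> 8" using xd x1000 by simp
  have as1: "real a \<le> s" "real a \<ge> s - 1" using ad spos by linarith+
  show "a * a \<le> n"
  proof -
    have "real a * real a \<le> s * s" using as1 by (simp add: mult_mono)
    then have "real (a * a) \<le> real n" using ss xd by simp
    then show ?thesis by linarith
  qed
  show "a \<ge> 2" using as1 s40 by linarith
  have Dx: "real D \<ge> x / 256"
  proof -
    define k where "k = (n - 8) div 128"
    have e: "real (n - 8) = 128 * real k + real ((n - 8) mod 128)"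
      unfolding k_def by (metis div_mult_mod_eq mult.commute of_nat_add of_nat_mult of_nat_numeral)
    have "(n - 8) mod 128 < 128" by simp
    then have m: "real ((n - 8) mod 128) < 128" by linarith
    have r: "real (n - 8) = x - 8" using xd x1000 by (simp add: of_nat_diff)
    have F8: "(x-8)/128 - 1 \<ge> x/256" using F' by blast
    have "x - 8 < 128 * real k + 128" using e m r by linarith
    then have "real k \<ge> x / 256" using F8 by (simp add: field_simps)
    then show ?thesis unfolding Dd k_def .
  qed
  show "D \<ge> 1" using Dx x1000 by linarith
  have t1: "real (N choose 8) * p ^ 28 < 1/3"
  proof -
    have "real (N choose 8) * p ^ 28 \<le> M ^ 8 * p ^ 28"
    proof (intro mult_right_mono)
      show "real (N choose 8) \<le> M ^ 8"
        using choose_le_pow_real[of N 8] power_mono[OF NM, of 8] Npos by linarith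
    qed (use p0 in auto)
    also have "\<dots> < 1/3" using F' M_def pd by simp
    finally show ?thesis .
  qed
  have t2: "real N * real ((N - 1) choose D) * p ^ D < 1/3"
  proof -
    have c1: "real ((N - 1) choose D) * fact D \<le> real N ^ D"
    proof -
      have "((N - 1) choose D) * fact D \<le> (N - 1) ^ D" by (rule binomial_fact_pow)
      also have "\<dots> \<le> N ^ D" by (intro power_mono) auto
      finally show ?thesis by (metis of_nat_fact of_nat_le_iff of_nat_mult of_nat_power)
    qed
    have fpos: "(fact D :: real) > 0" by simp
    have c2: "real ((N - 1) choose D) \<le> real N ^ D / fact D"
      using c1 fpos by (simp add: field_simps)
    have Dpos: "real D > 0" using Dx x1000 by linarith
    have c3: "real D ^ D / fact D \<le> exp (real D)" using exp_ge_pow_fact[of "real D" D] by simp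
    define q where "q = real N * p"
    have q0: "q \<ge> 0" using q_def Npos p0 by simp
    have qb: "q \<le> x / 2500"
    proof -
      have "q \<le> M * p" using q_def NM p0 by (simp add: mult_right_mono)
      also have "M * p = x / 2500"
      proof -
        have "M * p = (x*s/(10000*L)) * (4*L/s)" using M_def pd by simp
        also have "\<dots> = x / 2500" using spos L1 by (simp add: field_simps)
        finally show ?thesis .
      qed
      finally show ?thesis .
    qed
    have "real N * real ((N - 1) choose D) * p ^ D \<le> real N * (real N ^ D / fact D) * p ^ D"
      using c2 Npos p0 by (intro mult_right_mono mult_left_mono) auto
    also have "\<dots> = real N * ((q / real D) ^ D * (real D ^ D / fact D))"
      using Dpos by (simp add: q_def power_divide power_mult_distrib)
    also have "\<dots> \<le> real N * ((q / real D) ^ D * exp (real D))"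
      using c3 Npos q0 Dpos by (intro mult_left_mono) auto
    also have "(q / real D) ^ D * exp (real D) = (q / real D * exp 1) ^ D"
    proof -
      have "exp (real D) = exp 1 ^ D" using exp_of_nat_mult[of D 1] by simp
      then show ?thesis by (simp add: power_mult_distrib[symmetric])
    qed
    also have "\<dots> \<le> (1/2) ^ D"
    proof (intro power_mono)
      have "q / real D \<le> (x / 2500) / (x / 256)"
        using qb Dx q0 x1000 by (intro frac_le) auto
      also have "\<dots> = 256 / 2500" using x1000 by simp
      finally have "q / real D \<le> 256/2500" .
      then have "q / real D * exp 1 \<le> 256/2500 * 3"
        using exp_le q0 Dpos by (intro mult_mono) auto
      then show "q / real D * exp 1 \<le> 1/2" by simp
      show "0 \<le> q / real D * exp 1" using q0 Dpos by simp
    qed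
    also have "(1/2::real) ^ D \<le> (1/2) powr (x/256)"
    proof -
      have "(1/2::real) ^ D = (1/2) powr (real D)" by (simp add: powr_realpow)
      also have "\<dots> \<le> (1/2) powr (x/256)" using Dx by (intro powr_mono') auto
      finally show ?thesis .
    qed
    finally have "real N * real ((N - 1) choose D) * p ^ D \<le> real N * (1/2) powr (x/256)"
      using Npos by (simp add: mult_left_mono)
    also have "\<dots> \<le> M * (1/2) powr (x/256)" using NM by (intro mult_right_mono) auto
    also have "\<dots> < 1/3" using F' M_def by simp
    finally show ?thesis .
  qed
  have t3: "real (N choose a) * (1 - p) ^ (a choose 2) < 1/3"
  proof -
    have e1: "real (N choose a) \<le> exp (real a * ln (real N))"
      using choose_le_pow_real[of N a] Npos by (simp add: exp_of_nat_mult)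
    have e2: "(1 - p) ^ (a choose 2) \<le> exp (real (a choose 2) * (- p))"
    proof -
      have "(1 - p) ^ (a choose 2) \<le> exp (- p) ^ (a choose 2)"
        using p1 exp_ge_add_one_self[of "-p"] by (intro power_mono) auto
      moreover have "exp (- p) ^ (a choose 2) = exp (real (a choose 2) * (- p))"
        by (rule exp_of_nat_mult[symmetric])
      ultimately show ?thesis by simp
    qed
    have "real (N choose a) * (1 - p) ^ (a choose 2) \<le> exp (real a * ln (real N)) * exp (real (a choose 2) * (- p))"
      using e1 e2 p1 by (intro mult_mono) auto
    also have "\<dots> = exp (real a * (ln (real N) - (real a - 1) / 2 * p))"
      by (simp add: exp_add[symmetric] real_choose_two field_simps)
    also have "\<dots> \<le> exp (- 3)"
    proof -
      have lnN: "ln (real N) \<le> 3/2 * L"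
      proof -
        have "real N \<le> x * s" using NM M_def L1 x1000 spos
          by (smt (verit, ccfv_SIG) divide_le_eq mult_le_cancel_left1 mult_nonneg_nonneg)
        then have "ln (real N) \<le> ln (x * s)" using Npos by simp
        also have "ln (x * s) = 3/2 * L" using sd Ld x1000 by (simp add: ln_mult ln_sqrt)
        finally show ?thesis .
      qed
      have ap: "(real a - 1) / 2 * p \<ge> 2 * L * (s - 2) / s"
      proof -
        have "(real a - 1) / 2 * p \<ge> (s - 2) / 2 * p" using as1 p0 by (intro mult_right_mono) auto
        also have "(s - 2) / 2 * p = 2 * L * (s - 2) / s" using pd spos by (simp add: field_simps)
        finally show ?thesis by simp
      qed
      have br: "ln (real N) - (real a - 1) / 2 * p \<le> - L / 4"
        using lnN ap F' by linarith
      have "real a * (ln (real N) - (real a - 1) / 2 * p) \<le> real a * (- L / 4)"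
        by (intro mult_left_mono br) auto
      also have "\<dots> \<le> (s - 1) * (- L / 4)" using as1 L1 by (intro mult_right_mono_neg) auto
      also have "\<dots> \<le> -3" using F' by simp
      finally show ?thesis by simp
    qed
    also have "exp (-3::real) < 1/3"
    proof -
      have "1 + 3 \<le> exp (3::real)" using exp_ge_add_one_self[of 3] by simp
      then show ?thesis by (simp add: exp_minus field_simps)
    qed
    finally show ?thesis .
  qed
  show "real (N choose 8) * p ^ 28 + real N * real ((N - 1) choose D) * p ^ D
                + real (N choose a) * (1 - p) ^ (a choose 2) < 1" using t1 t2 t3 by simp
qed




lemma good_graph:
  fixes p :: real and N a D :: nat
  assumes p: "0 \<le> p" "p \<le> 1"
    and small: "real (N choose 8) * p ^ 28 + real N * real ((N - 1) choose D) * p ^ D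
                + real (N choose a) * (1 - p) ^ (a choose 2) < 1"
  shows "\<exists>E \<subseteq> nsets {0..<N} 2. (\<forall>S\<in>nsets {0..<N} 8. \<not> nsets S 2 \<subseteq> E)
          \<and> (\<forall>v<N. card {u\<in>{0..<N}. {v,u} \<in> E} < D)
          \<and> (\<forall>S\<in>nsets {0..<N} a. nsets S 2 \<inter> E \<noteq> {})"
proof -
  define V where "V = {0..<N}"
  define P where "P = nsets V 2"
  define I2 where "I2 = Sigma V (\<lambda>v. nsets (V - {v}) D)"
  define A2 where "A2 = (\<lambda>(v::nat,T). (\<lambda>u. {v,u}) ` T)"
  have finV: "finite V" unfolding V_def by simp
  have finP: "finite P" unfolding P_def using finV by (simp add: finite_imp_finite_nsets)
  have s1: "(\<Sum>S\<in>nsets V 8. p ^ card (nsets S 2)) = real (N choose 8) * p ^ 28"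
  proof -
    have "(\<Sum>S\<in>nsets V 8. p ^ card (nsets S 2)) = (\<Sum>S\<in>nsets V 8. p ^ 28)"
    proof (intro sum.cong refl)
      fix S assume "S \<in> nsets V 8"
      then have "card S = 8" by (simp add: nsets_def)
      moreover have "(8::nat) choose 2 = 28" by (simp add: choose_two)
      ultimately show "p ^ card (nsets S 2) = p ^ 28" by simp
    qed
    then show ?thesis by (simp add: V_def)
  qed
  have s0: "(\<Sum>S\<in>nsets V a. (1-p) ^ card (nsets S 2)) = real (N choose a) * (1-p) ^ (a choose 2)"
  proof -
    have "(\<Sum>S\<in>nsets V a. (1-p) ^ card (nsets S 2)) = (\<Sum>S\<in>nsets V a. (1-p) ^ (a choose 2))"
    proof (intro sum.cong refl)
      fix S assume "S \<in> nsets V a"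
      then have "card S = a" by (simp add: nsets_def)
      then show "(1-p) ^ card (nsets S 2) = (1-p) ^ (a choose 2)" by simp
    qed
    then show ?thesis by (simp add: V_def)
  qed
  have cardA2: "card (A2 i) = D" if "i \<in> I2" for i
  proof -
    obtain v T where i0: "i = (v,T)" by (cases i)
    have i: "i = (v,T)" "v \<in> V" "T \<in> nsets (V - {v}) D" using that i0 unfolding I2_def by auto
    have "inj_on (\<lambda>u. {v,u}) T" unfolding inj_on_def by (auto simp: doubleton_eq_iff)
    then show ?thesis using i by (simp add: A2_def card_image nsets_def)
  qed
  have s2: "(\<Sum>i\<in>I2. p ^ card (A2 i)) = real N * real ((N - 1) choose D) * p ^ D"
  proof -
    have "(\<Sum>i\<in>I2. p ^ card (A2 i)) = (\<Sum>i\<in>I2. p ^ D)" using cardA2 by (intro sum.cong) auto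
    also have "\<dots> = real (card I2) * p ^ D" by simp
    also have "card I2 = (\<Sum>v\<in>V. card (nsets (V - {v}) D))"
      unfolding I2_def using finV by (intro card_SigmaI) (auto intro: finite_imp_finite_nsets)
    also have "\<dots> = (\<Sum>v\<in>V. (N - 1) choose D)"
      using finV by (intro sum.cong) (auto simp: V_def)
    also have "\<dots> = N * ((N - 1) choose D)" by (simp add: V_def)
    finally show ?thesis by simp
  qed
  have "\<exists>E\<subseteq>P. (\<forall>i\<in>nsets V 8. \<not> nsets i 2 \<subseteq> E) \<and> (\<forall>i\<in>I2. \<not> A2 i \<subseteq> E) \<and> (\<forall>i\<in>nsets V a. nsets i 2 \<inter> E \<noteq> {})"
  proof (rule exists_good[OF finP p])
    show "finite (nsets V 8)" "finite I2" "finite (nsets V a)"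
      using finV unfolding I2_def by (auto intro: finite_imp_finite_nsets)
    show "\<forall>i\<in>nsets V 8. nsets i 2 \<subseteq> P" "\<forall>i\<in>nsets V a. nsets i 2 \<subseteq> P"
      unfolding P_def by (auto simp: nsets_def)
    show "\<forall>i\<in>I2. A2 i \<subseteq> P" unfolding I2_def A2_def P_def by (auto simp: nsets_def card_insert_if)
    show "(\<Sum>i\<in>nsets V 8. p ^ card (nsets i 2)) + (\<Sum>i\<in>I2. p ^ card (A2 i)) + (\<Sum>i\<in>nsets V a. (1 - p) ^ card (nsets i 2)) < 1"
      using s1 s2 s0 small by simp
  qed
  then obtain E where E: "E \<subseteq> P" "\<forall>i\<in>nsets V 8. \<not> nsets i 2 \<subseteq> E" "\<forall>i\<in>I2. \<not> A2 i \<subseteq> E"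
    "\<forall>i\<in>nsets V a. nsets i 2 \<inter> E \<noteq> {}" by blast
  have deg: "card {u\<in>V. {v,u} \<in> E} < D" if v: "v < N" for v
  proof (rule ccontr)
    assume "\<not> ?thesis"
    then have "D \<le> card {u\<in>V. {v,u} \<in> E}" by simp
    then obtain T where T: "T \<subseteq> {u\<in>V. {v,u} \<in> E}" "card T = D"
      by (meson obtain_subset_with_card_n)
    have "v \<notin> T"
    proof
      assume "v \<in> T" then have "{v} \<in> E" using T by auto
      then show False using E(1) unfolding P_def nsets_def by auto
    qed
    then have "T \<in> nsets (V - {v}) D" using T finV by (auto simp: nsets_def intro: finite_subset)
    then have "(v,T) \<in> I2" using v unfolding I2_def V_def by auto
    moreover have "A2 (v,T) \<subseteq> E" using T unfolding A2_def by auto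
    ultimately show False using E(3) by blast
  qed
  show ?thesis using E deg unfolding P_def V_def by blast
qed




definition spk :: "nat \<Rightarrow> nat" where "spk s = (s - 8) mod 64"
definition hS :: "nat \<Rightarrow> nat set" where "hS n = {s\<in>{8..<n}. spk s div 8 \<noteq> spk s mod 8}"
definition hE :: "nat \<Rightarrow> nat set set" where
  "hE n = (\<lambda>s. {spk s div 8, spk s mod 8, s}) ` hS n"

lemma spk_bounds: "spk s div 8 < 8" "spk s mod 8 < 8"
  unfolding spk_def by auto

lemma hedge:
  assumes "n \<ge> 8"
  shows "hedgehog_with ({0..<n} - hS n) (hS n) {0..<n} (hE n)"
  unfolding hedgehog_with_def
proof (intro conjI)
  have e3: "card {spk s div 8, spk s mod 8, s} = 3" if "s \<in> hS n" for s
    using that spk_bounds[of s] unfolding hS_def by auto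
  show "is_3graph {0..<n} (hE n)"
  proof -
    have "spk s div 8 < n" "spk s mod 8 < n" for s using spk_bounds[of s] assms by linarith+
    then show ?thesis unfolding is_3graph_def hE_def using e3 by (auto simp: hS_def)
  qed
  show "{0..<n} = {0..<n} - hS n \<union> hS n" by (auto simp: hS_def)
  show "({0..<n} - hS n) \<inter> hS n = {}" by auto
  show "\<forall>e\<in>hE n. card (e \<inter> hS n) = 1 \<and> card (e \<inter> ({0..<n} - hS n)) = 2"
  proof
    fix e assume "e \<in> hE n"
    then obtain s where s: "s \<in> hS n" "e = {spk s div 8, spk s mod 8, s}" unfolding hE_def by auto
    have nS: "spk s div 8 \<notin> hS n" "spk s mod 8 \<notin> hS n" using spk_bounds[of s] by (auto simp: hS_def)
    have "e \<inter> hS n = {s}" using s nS by auto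
    moreover have "e \<inter> ({0..<n} - hS n) = {spk s div 8, spk s mod 8}"
      using s nS spk_bounds[of s] assms by auto
    moreover have "spk s div 8 \<noteq> spk s mod 8" using s by (auto simp: hS_def)
    ultimately show "card (e \<inter> hS n) = 1 \<and> card (e \<inter> ({0..<n} - hS n)) = 2" by simp
  qed
  show "\<forall>s\<in>hS n. \<exists>!e. e \<in> hE n \<and> s \<in> e"
  proof
    fix s assume s: "s \<in> hS n"
    show "\<exists>!e. e \<in> hE n \<and> s \<in> e"
    proof (rule ex1I[of _ "{spk s div 8, spk s mod 8, s}"])
      show "{spk s div 8, spk s mod 8, s} \<in> hE n \<and> s \<in> {spk s div 8, spk s mod 8, s}"
        using s unfolding hE_def by auto
    next
      fix e assume e: "e \<in> hE n \<and> s \<in> e"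
      then obtain s' where s': "s' \<in> hS n" "e = {spk s' div 8, spk s' mod 8, s'}" unfolding hE_def by auto
      have "s \<ge> 8" using s by (auto simp: hS_def)
      then have "s = s'" using e s' spk_bounds[of s'] by auto
      then show "e = {spk s div 8, spk s mod 8, s}" using s' by simp
    qed
  qed
qed

lemma red_free:
  fixes E :: "nat set set"
  assumes Esub: "E \<subseteq> nsets {0..<N} 2"
    and noclique: "\<forall>S\<in>nsets {0..<N} 8. \<not> nsets S 2 \<subseteq> E"
    and deg: "\<forall>v<N. card {u\<in>{0..<N}. {v,u} \<in> E} < D"
    and DM: "2 * D \<le> (n - 8) div 64" and n8: "n \<ge> 8"
    and col: "col = (\<lambda>T. \<exists>u\<in>T. \<exists>v\<in>T. {u,v} \<in> E)"
  shows "\<not> has_copy N col True {0..<n} (hE n)"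
proof
  assume "has_copy N col True {0..<n} (hE n)"
  then obtain g where g: "inj_on g {0..<n}" "g ` {0..<n} \<subseteq> {0..<N}" "\<forall>e\<in>hE n. col (g ` e) = True"
    unfolding has_copy_def by blast
  define K where "K = g ` {0..<8}"
  have injK: "inj_on g {0..<8}" using g(1) n8 by (auto intro: inj_on_subset)
  have "K \<in> nsets {0..<N} 8" unfolding K_def nsets_def using g(2) n8 injK by (auto simp: card_image)
  then have "\<not> nsets K 2 \<subseteq> E" using noclique by blast
  then obtain X where X: "X \<in> nsets K 2" "X \<notin> E" by blast
  then obtain i j where ij: "i < 8" "j < 8" "i \<noteq> j" "X = {g i, g j}"
    unfolding nsets_def K_def by (auto simp: card_2_iff) metis
  define \<mu> where "\<mu> = (n - 8) div 64"
  define T where "T = (\<lambda>k. 8 + (8*i+j) + 64*k) ` {..<\<mu>}"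
  have cardT: "card T = \<mu>" unfolding T_def by (subst card_image) (auto simp: inj_on_def)
  have Tn: "t < n" if tT: "t \<in> T" for t
  proof -
    obtain k where k: "k < \<mu>" "t = 8 + (8*i+j) + 64*k" using tT unfolding T_def by auto
    have "64 * k + 64 \<le> 64 * \<mu>" using k by simp
    also have "64 * \<mu> \<le> n - 8" unfolding \<mu>_def by simp
    finally show ?thesis using k ij by simp
  qed
  have spkT: "spk t = 8*i+j" if tT: "t \<in> T" for t
  proof -
    obtain k where k: "t = 8 + (8*i+j) + 64*k" using tT unfolding T_def by auto
    have lt: "8*i+j < 64" using ij by linarith
    have eq: "8 + (8*i+j) + 64*k - 8 = (8*i+j) + 64*k" by simp
    have "spk t = ((8*i+j) + 64*k) mod 64" by (simp only: spk_def k eq)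
    also have "\<dots> = (8*i+j) mod 64" by (rule mod_mult_self2)
    also have "\<dots> = 8*i+j" using lt by simp
    finally show ?thesis .
  qed
  have Nb: "g t \<in> {u\<in>{0..<N}. {g i,u} \<in> E} \<union> {u\<in>{0..<N}. {g j,u} \<in> E}" if t: "t \<in> T" for t
  proof -
    have sd: "spk t div 8 = i" "spk t mod 8 = j" using spkT[OF t] ij by auto
    have "t \<ge> 8" using t unfolding T_def by auto
    then have tS: "t \<in> hS n" using Tn[OF t] sd ij unfolding hS_def by auto
    then have "{i, j, t} \<in> hE n" unfolding hE_def using sd by force
    then have "col (g ` {i, j, t})" using g(3) by blast
    then obtain u v where uv0: "u \<in> g ` {i, j, t}" "v \<in> g ` {i, j, t}" "{u,v} \<in> E"
      unfolding col by blast
    then have uv: "u \<in> {g i, g j, g t}" "v \<in> {g i, g j, g t}" "{u,v} \<in> E" by auto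
    have "u \<noteq> v" using uv(3) Esub unfolding nsets_def by auto
    moreover have "{g i, g j} \<notin> E" "{g j, g i} \<notin> E" using X ij by (auto simp: insert_commute)
    moreover have "g t \<in> {0..<N}" using g(2) Tn[OF t] by (meson atLeastLessThan_iff image_subset_iff zero_le)
    ultimately show ?thesis using uv by (auto simp: insert_commute)
  qed
  have injT: "inj_on g T" using g(1) Tn by (meson atLeastLessThan_iff inj_on_subset subsetI zero_le)
  have "\<mu> = card (g ` T)" using cardT injT by (simp add: card_image)
  also have "\<dots> \<le> card ({u\<in>{0..<N}. {g i,u} \<in> E} \<union> {u\<in>{0..<N}. {g j,u} \<in> E})"
    using Nb by (intro card_mono) auto
  also have "\<dots> \<le> card {u\<in>{0..<N}. {g i,u} \<in> E} + card {u\<in>{0..<N}. {g j,u} \<in> E}"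
    by (rule card_Un_le)
  finally have "\<mu> \<le> card {u\<in>{0..<N}. {g i,u} \<in> E} + card {u\<in>{0..<N}. {g j,u} \<in> E}" .
  moreover have "i < n" "j < n" using ij n8 by auto
  then have "g i < N" "g j < N" using g(2) by (meson atLeastLessThan_iff image_subset_iff zero_le)+
  ultimately have "\<mu> < 2 * D"
  proof -
    assume a1: "\<mu> \<le> card {u\<in>{0..<N}. {g i,u} \<in> E} + card {u\<in>{0..<N}. {g j,u} \<in> E}"
      and a2: "g i < N" and a3: "g j < N"
    have "card {u\<in>{0..<N}. {g i,u} \<in> E} < D" using deg a2 by blast
    moreover have "card {u\<in>{0..<N}. {g j,u} \<in> E} < D" using deg a3 by blast
    ultimately show ?thesis using a1 by linarith
  qed
  then show False using DM unfolding \<mu>_def by linarith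
qed




lemma blue_free:
  fixes E :: "nat set set" and VS :: "'a set"
  assumes noind: "\<forall>S\<in>nsets {0..<N} a. nsets S 2 \<inter> E \<noteq> {}"
    and aa: "a * a \<le> n" and a1: "a \<ge> 1"
    and std: "std_hedgehog VS ES1" and cardV: "card VS = n"
    and col: "col = (\<lambda>T. \<exists>u\<in>T. \<exists>v\<in>T. {u,v} \<in> E)"
  shows "\<not> has_copy N col False VS ES1"
proof
  assume "has_copy N col False VS ES1"
  then obtain f where f: "inj_on f VS" "f ` VS \<subseteq> {0..<N}" "\<forall>e\<in>ES1. col (f ` e) = False"
    unfolding has_copy_def by blast
  obtain B S where BS: "hedgehog_with B S VS ES1"
    and stdp: "\<forall>x\<in>B. \<forall>y\<in>B. x \<noteq> y \<longrightarrow> (\<exists>!s. s \<in> S \<and> {x, y, s} \<in> ES1)"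
    using std unfolding std_hedgehog_def by blast
  have g3: "is_3graph VS ES1" and VBS: "VS = B \<union> S" and disj: "B \<inter> S = {}"
    and edges: "\<forall>e\<in>ES1. card (e \<inter> S) = 1 \<and> card (e \<inter> B) = 2"
    and spikes: "\<forall>s\<in>S. \<exists>!e. e \<in> ES1 \<and> s \<in> e"
    using BS unfolding hedgehog_with_def by auto
  have finV: "finite VS" and esub: "\<forall>e\<in>ES1. e \<subseteq> VS \<and> card e = 3" using g3 unfolding is_3graph_def by auto
  have finB: "finite B" and finS: "finite S" using finV VBS by auto
  define es where "es s = (THE e. e \<in> ES1 \<and> s \<in> e)" for s
  have es: "es s \<in> ES1" "s \<in> es s" if "s \<in> S" for s
    using theI'[OF spikes[rule_format, OF that]] unfolding es_def by auto
  define h where "h s = es s - {s}" for s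
  have hB: "h s \<in> nsets B 2" "es s = insert s (h s)" if s: "s \<in> S" for s
  proof -
    have c1: "card (es s \<inter> S) = 1" using edges es[OF s] by blast
    have "es s \<inter> S = {s}"
    proof -
      obtain z where "es s \<inter> S = {z}" using c1 by (auto simp: card_1_singleton_iff)
      then show ?thesis using es(2)[OF s] s by auto
    qed
    moreover have "es s \<subseteq> B \<union> S" using esub es[OF s] VBS by auto
    ultimately have "h s = es s \<inter> B" unfolding h_def using disj by auto
    then show "h s \<in> nsets B 2" using edges es[OF s] unfolding nsets_def by (auto intro: finite_subset[OF _ finB])
    show "es s = insert s (h s)" unfolding h_def using es(2)[OF s] by auto
  qed
  have injh: "inj_on h S"
  proof
    fix s s' assume s: "s \<in> S" and s': "s' \<in> S" and eq: "h s = h s'"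
    obtain x y where xy: "h s = {x, y}" "x \<noteq> y" "x \<in> B" "y \<in> B"
      using hB(1)[OF s] unfolding nsets_def by (auto simp: card_2_iff)
    have "{x, y, s} \<in> ES1" using es(1)[OF s] hB(2)[OF s] xy by (simp add: insert_commute)
    moreover have "{x, y, s'} \<in> ES1" using es(1)[OF s'] hB(2)[OF s'] xy eq by (simp add: insert_commute)
    ultimately show "s = s'" using stdp xy s s' by blast
  qed
  have "card S \<le> card (nsets B 2)"
    using injh hB(1) finB by (intro card_inj_on_le) (auto intro: finite_imp_finite_nsets)
  then have cS: "card S \<le> card B choose 2" by simp
  have nBS: "n = card B + card S" using cardV VBS disj finB finS by (simp add: card_Un_disjoint)
  define m where "m = card B"
  have am: "a \<le> m"
  proof (rule ccontr)
    assume "\<not> a \<le> m"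
    then have ma: "m + 1 \<le> a" by simp
    have "2 * (m choose 2) \<le> m * (m - 1)" by (simp add: choose_two)
    then have "2 * n \<le> 2 * m + m * (m - 1)" using nBS cS unfolding m_def by linarith
    also have "2 * m + m * (m - 1) = m * (m + 1)" by (cases m) (auto simp: algebra_simps)
    also have "m * (m + 1) \<le> (a - 1) * a" using ma by (intro mult_le_mono) auto
    also have "(a - 1) * a < a * a" using a1 by simp
    finally have "2 * n < a * a" .
    then show False using aa by linarith
  qed
  obtain B' where B': "B' \<subseteq> B" "card B' = a" using am m_def by (meson obtain_subset_with_card_n)
  have injB': "inj_on f B'" using f(1) B'(1) VBS by (auto intro: inj_on_subset)
  have "f ` B' \<in> nsets {0..<N} a"
    using B' injB' f(2) VBS finB unfolding nsets_def by (auto simp: card_image intro: finite_subset)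
  then obtain Y where Y: "Y \<in> nsets (f ` B') 2" "Y \<in> E" using noind by blast
  then obtain x y where xy: "x \<in> B'" "y \<in> B'" "Y = {f x, f y}" "f x \<noteq> f y"
    unfolding nsets_def by (auto simp: card_2_iff)
  then have "x \<noteq> y" by auto
  then obtain s where s: "s \<in> S" "{x, y, s} \<in> ES1" using stdp xy B'(1) by blast
  then have "col (f ` {x, y, s}) = False" using f(3) by blast
  moreover have "f x \<in> f ` {x, y, s}" "f y \<in> f ` {x, y, s}" by auto
  ultimately show False using Y xy unfolding col by blast
qed

lemma has_copy_mono: "has_copy M col b V E \<Longrightarrow> M \<le> N \<Longrightarrow> has_copy N col b V E"
proof -
  assume h: "has_copy M col b V E" and MN: "M \<le> N"
  then obtain f where f: "inj_on f V" "f ` V \<subseteq> {0..<M}" "\<forall>e\<in>E. col (f ` e) = b"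
    unfolding has_copy_def by blast
  have "{0..<M} \<subseteq> {0..<N}" using MN by auto
  then have "f ` V \<subseteq> {0..<N}" using f(2) by (rule subset_trans[rotated])
  then show ?thesis unfolding has_copy_def using f(1,3) by blast
qed

lemma arrows_mono: "arrows3 M VG EG VH EH \<Longrightarrow> M \<le> N \<Longrightarrow> arrows3 N VG EG VH EH"
proof -
  assume a: "arrows3 M VG EG VH EH" and MN: "M \<le> N"
  show ?thesis unfolding arrows3_def
  proof
    fix col
    have "has_copy M col False VG EG \<or> has_copy M col True VH EH" using a unfolding arrows3_def by blast
    then show "has_copy N col False VG EG \<or> has_copy N col True VH EH"
      using has_copy_mono[OF _ MN, of col False VG EG] has_copy_mono[OF _ MN, of col True VH EH] by blast
  qed
qed

lemma copy_from_mono: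
  assumes g3: "is_3graph V E" and cV: "card V = card H" and finH: "finite H"
    and Hsub: "H \<subseteq> {0..<N}" and mono: "\<forall>T\<in>nsets H 3. col T = b"
  shows "has_copy N col b V E"
proof -
  have finV: "finite V" using g3 unfolding is_3graph_def by auto
  obtain g where g: "bij_betw g V H" using finite_same_card_bij[OF finV finH cV] by blast
  have inj: "inj_on g V" and im: "g ` V = H" using g unfolding bij_betw_def by auto
  show ?thesis unfolding has_copy_def
  proof (intro exI conjI ballI)
    show "inj_on g V" by (rule inj)
    show "g ` V \<subseteq> {0..<N}" using im Hsub by simp
    fix e assume e: "e \<in> E"
    then have e3: "e \<subseteq> V" "card e = 3" using g3 unfolding is_3graph_def by auto
    have "inj_on g e" using inj e3(1) by (rule inj_on_subset)
    then have "card (g ` e) = 3" using e3 by (simp add: card_image)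
    moreover have "g ` e \<subseteq> H" using e3(1) im by auto
    ultimately have "g ` e \<in> nsets H 3" unfolding nsets_def using finH by (auto intro: finite_subset)
    then show "col (g ` e) = b" using mono by blast
  qed
qed

lemma arrows_ex:
  assumes g1: "is_3graph VG EG" and g2: "is_3graph VH EH"
    and c1: "card VG = k" and c2: "card VH = k"
  shows "\<exists>N. arrows3 N VG EG VH EH"
proof -
  obtain N :: nat where N: "partn_lst {..<N} [k,k] 3" using ramsey_full[of "[k,k]" 3] by blast
  have "arrows3 N VG EG VH EH" unfolding arrows3_def
  proof
    fix col :: "nat set \<Rightarrow> bool"
    define f where "f T = (if col T then 1 else 0::nat)" for T
    have fin: "f \<in> nsets {..<N} 3 \<rightarrow> {..<2}" unfolding f_def by auto
    have len: "length [k,k] = 2" by simp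
    obtain i H where iH: "i < length [k,k]" "H \<in> nsets {..<N} ([k,k]!i)" "f ` (nsets H 3) \<subseteq> {i}"
      by (rule partn_lstE[OF N fin len])
    have ck: "[k,k]!i = k" using iH(1) by (cases i) auto
    have H: "finite H" "card H = k" "H \<subseteq> {0..<N}" using iH(2) ck unfolding nsets_def by auto
    have fT: "f T = i" if "T \<in> nsets H 3" for T using iH(3) that by blast
    show "has_copy N col False VG EG \<or> has_copy N col True VH EH"
    proof (cases "i = 0")
      case True
      have mono: "\<forall>T\<in>nsets H 3. col T = False"
      proof
        fix T assume "T \<in> nsets H 3"
        then have "f T = 0" using fT True by blast
        then show "col T = False" unfolding f_def by (cases "col T") auto
      qed
      have ce: "card VG = card H" using c1 H(2) by simp
      show ?thesis by (rule disjI1, rule copy_from_mono[OF g1 ce H(1) H(3) mono])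
    next
      case False
      then have i1: "i = 1" using iH(1) by simp
      have mono: "\<forall>T\<in>nsets H 3. col T = True"
      proof
        fix T assume "T \<in> nsets H 3"
        then have "f T = 1" using fT i1 by blast
        then show "col T = True" unfolding f_def by (cases "col T") auto
      qed
      have ce: "card VH = card H" using c2 H(2) by simp
      show ?thesis by (rule disjI2, rule copy_from_mono[OF g2 ce H(1) H(3) mono])
    qed
  qed
  then show ?thesis by blast
qed

lemma ramsey_gt:
  assumes "\<not> arrows3 N VG EG VH EH" "\<exists>M. arrows3 M VG EG VH EH"
  shows "N < ramsey3 VG EG VH EH"
proof (rule ccontr)
  assume "\<not> ?thesis"
  then have le: "ramsey3 VG EG VH EH \<le> N" by simp
  have "arrows3 (ramsey3 VG EG VH EH) VG EG VH EH"
    unfolding ramsey3_def using assms(2) by (rule LeastI_ex)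
  then have "arrows3 N VG EG VH EH" using le by (rule arrows_mono)
  then show False using assms(1) by simp
qed




theorem mainTheorem6:
  shows "\<exists>c::real. c > 0 \<and> (\<exists>n0::nat. \<forall>n\<ge>n0.
     \<exists>(VH::nat set) EH. gen_hedgehog VH EH \<and> card VH = n \<and>
       (\<forall>(VS::nat set) ES. std_hedgehog VS ES \<and> card VS = n \<longrightarrow>
          real (ramsey3 VS ES VH EH) \<ge> c * real n powr (3/2) / ln (real n)))"
proof -
  have ev: "eventually (\<lambda>n. (\<lambda>x::real. x \<ge> 1000 \<and> 4 * ln x / sqrt x \<le> 1
     \<and> (x*sqrt x/(10000*ln x))^8 * (4*ln x/sqrt x)^28 < 1/3
     \<and> x*sqrt x/(10000*ln x) * (1/2) powr (x/256) < 1/3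
     \<and> 3/2*ln x - 2*ln x*(sqrt x-2)/sqrt x \<le> - ln x/4
     \<and> (sqrt x - 1)*ln x/4 \<ge> 3
     \<and> x*sqrt x/(10000*ln x) - 1 \<ge> x powr (3/2)/(20000*ln x)
     \<and> (x-8)/128 - 1 \<ge> x/256
     \<and> ln x \<ge> 1 \<and> sqrt x \<ge> 40) (real n)) sequentially"
    by (rule eventually_compose_filterlim[OF eventually_real_facts filterlim_real_sequentially])
  then obtain n0 where n0: "\<And>n. n \<ge> n0 \<Longrightarrow> (\<lambda>x::real. x \<ge> 1000 \<and> 4 * ln x / sqrt x \<le> 1
     \<and> (x*sqrt x/(10000*ln x))^8 * (4*ln x/sqrt x)^28 < 1/3
     \<and> x*sqrt x/(10000*ln x) * (1/2) powr (x/256) < 1/3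
     \<and> 3/2*ln x - 2*ln x*(sqrt x-2)/sqrt x \<le> - ln x/4
     \<and> (sqrt x - 1)*ln x/4 \<ge> 3
     \<and> x*sqrt x/(10000*ln x) - 1 \<ge> x powr (3/2)/(20000*ln x)
     \<and> (x-8)/128 - 1 \<ge> x/256
     \<and> ln x \<ge> 1 \<and> sqrt x \<ge> 40) (real n)"
    unfolding eventually_sequentially by blast
  have "\<forall>n\<ge>n0.
     \<exists>(VH::nat set) EH. gen_hedgehog VH EH \<and> card VH = n \<and>
       (\<forall>(VS::nat set) ES1. std_hedgehog VS ES1 \<and> card VS = n \<longrightarrow>
          real (ramsey3 VS ES1 VH EH) \<ge> (1/20000) * real n powr (3/2) / ln (real n))"
  proof (intro allI impI)
    fix n assume nn0: "n \<ge> n0"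
    define x where "x = real n"
    define s where "s = sqrt x"
    define L where "L = ln x"
    define p where "p = 4*L/s"
    define N where "N = nat \<lfloor>x*s/(10000*L)\<rfloor>"
    define a where "a = nat \<lfloor>s\<rfloor>"
    define D where "D = (n - 8) div 128"
    note nums = numeric[OF x_def s_def L_def p_def N_def a_def D_def n0[OF nn0, folded x_def]]
    obtain E where E: "E \<subseteq> nsets {0..<N} 2" "\<forall>S\<in>nsets {0..<N} 8. \<not> nsets S 2 \<subseteq> E"
          "\<forall>v<N. card {u\<in>{0..<N}. {v,u} \<in> E} < D"
          "\<forall>S\<in>nsets {0..<N} a. nsets S 2 \<inter> E \<noteq> {}"
      using good_graph[OF nums(1) nums(2) nums(3)] by blast
    define col where "col = (\<lambda>T. \<exists>u\<in>T. \<exists>v\<in>T. {u,v} \<in> E)"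
    have hh: "hedgehog_with ({0..<n} - hS n) (hS n) {0..<n} (hE n)" using hedge nums(8) by blast
    have gh: "gen_hedgehog {0..<n} (hE n)" unfolding gen_hedgehog_def using hh by blast
    have DM: "2 * D \<le> (n - 8) div 64"
    proof -
      have "(n - 8) div 128 = (n - 8) div 64 div 2" by (simp add: div_mult2_eq[symmetric])
      then show ?thesis unfolding D_def by linarith
    qed
    have red: "\<not> has_copy N col True {0..<n} (hE n)"
      by (rule red_free[OF E(1) E(2) E(3) DM nums(8) col_def])
    show "\<exists>(VH::nat set) EH. gen_hedgehog VH EH \<and> card VH = n \<and>
       (\<forall>(VS::nat set) ES1. std_hedgehog VS ES1 \<and> card VS = n \<longrightarrow>
          real (ramsey3 VS ES1 VH EH) \<ge> (1/20000) * real n powr (3/2) / ln (real n))"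
    proof (intro exI conjI allI impI)
      show "gen_hedgehog {0..<n} (hE n)" by (rule gh)
      show "card {0..<n} = n" by simp
      fix VS :: "nat set" and ES1 assume VS: "std_hedgehog VS ES1 \<and> card VS = n"
      have a1: "a \<ge> 1" using nums(6) by simp
      have blue: "\<not> has_copy N col False VS ES1"
        using blue_free[OF E(4) nums(5) a1 _ _ col_def] VS by blast
      have nar: "\<not> arrows3 N VS ES1 {0..<n} (hE n)"
        unfolding arrows3_def using red blue by blast
      have g1: "is_3graph VS ES1" using VS unfolding std_hedgehog_def hedgehog_with_def by blast
      have g2: "is_3graph {0..<n} (hE n)" using hh unfolding hedgehog_with_def by blast
      have "\<exists>M. arrows3 M VS ES1 {0..<n} (hE n)"
        by (rule arrows_ex[OF g1 g2]) (use VS in auto)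
      then have "N < ramsey3 VS ES1 {0..<n} (hE n)" using nar ramsey_gt by blast
      then have "real N \<le> real (ramsey3 VS ES1 {0..<n} (hE n))" by simp
      moreover have "real N \<ge> x powr (3/2) / (20000 * ln x)" by (rule nums(4))
      moreover have "x powr (3/2) / (20000 * ln x) = (1/20000) * real n powr (3/2) / ln (real n)"
        unfolding x_def by simp
      ultimately show "real (ramsey3 VS ES1 {0..<n} (hE n)) \<ge> (1/20000) * real n powr (3/2) / ln (real n)"
        by linarith
    qed
  qed
  then show ?thesis by (intro exI[of _ "1/20000"]) auto
qed


end
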